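(* In the setting of the context, let $p>L$ and $\alpha>0$, and set $\sigma_2=\frac{2(p+L)}{p-L}$. For every $y\in Y$ and $z\in\mathbb{R}^n$, $$\alpha(p-L)\|x^*(z)-x(y_+(z),z)\|^2\le(1+\alpha L+\alpha L\sigma_2)\|y-y_+(z)\|\cdot\mathrm{dist}(y_+(z),Y(z))\le(1+\alpha L+\alpha L\sigma_2)\|y-y_+(z)\|\cdot D(Y),$$ where $D(Y)$ is the diameter of $Y$.
   Context: $X\subseteq\mathbb{R}^n$ nonempty closed convex, $Y\subseteq\mathbb{R}^m$ nonempty closed convex compact, $f$ continuously differentiable with $f(x,\cdot)$ concave for each $x$, $\nabla_xf$ and $\nabla_yf$ $L$-Lipschitz, $\max_{y\in Y}f(x,y)$ bounded below. $P_Y$ is Euclidean projection and $\mathrm{dist}$ Euclidean distance to a set. $K(x,z;y)=f(x,y)+\frac p2\|x-z\|^2$; $x(y,z)=\arg\min_{x\in X}K(x,z;y)$; $d(y,z)=\min_{x\in X}K(x,z;y)$; $Y(z)=\arg\max_{y\in Y}d(y,z)$; $x^*(z)=\arg\min_{x\in X}\max_{y\in Y}K(x,z;y)$; $y_+(z)=P_Y\big(y+\alpha\nabla_yK(x(y,z),z;y)\big)$ (depending on $y$). *)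

theory Defs
  imports "HOL-Analysis.Analysis"
begin

definition Kfun :: "('a::euclidean_space \<Rightarrow> 'b::euclidean_space \<Rightarrow> real) \<Rightarrow> real \<Rightarrow> 'a \<Rightarrow> 'a \<Rightarrow> 'b \<Rightarrow> real" where
  "Kfun f p x z y = f x y + p / 2 * (norm (x - z))\<^sup>2"

definition xmin :: "('a::euclidean_space \<Rightarrow> 'b::euclidean_space \<Rightarrow> real) \<Rightarrow> real \<Rightarrow> 'a set \<Rightarrow> 'b \<Rightarrow> 'a \<Rightarrow> 'a" where
  "xmin f p X y z = (SOME x. x \<in> X \<and> (\<forall>x'\<in>X. Kfun f p x z y \<le> Kfun f p x' z y))"

definition dfun :: "('a::euclidean_space \<Rightarrow> 'b::euclidean_space \<Rightarrow> real) \<Rightarrow> real \<Rightarrow> 'a set \<Rightarrow> 'b \<Rightarrow> 'a \<Rightarrow> real" where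
  "dfun f p X y z = (INF x\<in>X. Kfun f p x z y)"

definition Yset :: "('a::euclidean_space \<Rightarrow> 'b::euclidean_space \<Rightarrow> real) \<Rightarrow> real \<Rightarrow> 'a set \<Rightarrow> 'b set \<Rightarrow> 'a \<Rightarrow> 'b set" where
  "Yset f p X Y z = {y \<in> Y. \<forall>y'\<in>Y. dfun f p X y' z \<le> dfun f p X y z}"

definition xstar :: "('a::euclidean_space \<Rightarrow> 'b::euclidean_space \<Rightarrow> real) \<Rightarrow> real \<Rightarrow> 'a set \<Rightarrow> 'b set \<Rightarrow> 'a \<Rightarrow> 'a" where
  "xstar f p X Y z = (SOME x. x \<in> X \<and>
      (\<forall>x'\<in>X. (SUP y\<in>Y. Kfun f p x z y) \<le> (SUP y\<in>Y. Kfun f p x' z y)))"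

text \<open>y_+(z) = P_Y(y + alpha * grad_y K(x(y,z),z;y)); note grad_y K = grad_y f,
  where gy is the partial gradient of f with respect to y.\<close>
definition yplus :: "('a::euclidean_space \<Rightarrow> 'b::euclidean_space \<Rightarrow> real) \<Rightarrow> ('a \<Rightarrow> 'b \<Rightarrow> 'b) \<Rightarrow> real \<Rightarrow> real \<Rightarrow> 'a set \<Rightarrow> 'b set \<Rightarrow> 'b \<Rightarrow> 'a \<Rightarrow> 'b" where
  "yplus f gy p \<alpha> X Y y z = closest_point Y (y + \<alpha> *\<^sub>R gy (xmin f p X y z) y)"

end

theory Submission
  imports Defs
begin

lemma small_le0:
  fixes a c :: real
  assumes "\<And>t. 0 < t \<Longrightarrow> t \<le> 1 \<Longrightarrow> a \<le> c * t"
  shows "a \<le> 0"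
proof (rule ccontr)
  assume "\<not> a \<le> 0"
  hence a: "a > 0" by simp
  define t where "t = min 1 (a / (2 * (\<bar>c\<bar> + 1)))"
  have t0: "0 < t" using a by (simp add: t_def)
  have t1: "t \<le> 1" by (simp add: t_def)
  have "c * t \<le> \<bar>c\<bar> * t" using t0 by (simp add: mult_right_mono)
  also have "\<dots> \<le> (\<bar>c\<bar> + 1) * (a / (2 * (\<bar>c\<bar> + 1)))"
    using t0 by (intro mult_mono) (auto simp: t_def)
  also have "\<dots> = a / 2" by (simp add: field_simps)
  finally show False using assms[OF t0 t1] a by simp
qed

lemma line_deriv:
  fixes F :: "'c::euclidean_space \<Rightarrow> real"
  assumes "\<And>u. (F has_derivative (\<lambda>h. G u \<bullet> h)) (at u)"
  shows "((\<lambda>t. F (u + t *\<^sub>R d)) has_real_derivative (G (u + t *\<^sub>R d) \<bullet> d)) (at t)"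
proof -
  have l: "((\<lambda>t. u + t *\<^sub>R d) has_derivative (\<lambda>h. h *\<^sub>R d)) (at t)"
    by (auto intro!: derivative_eq_intros)
  have "((\<lambda>t. F (u + t *\<^sub>R d)) has_derivative (\<lambda>h. G (u + t *\<^sub>R d) \<bullet> (h *\<^sub>R d))) (at t)"
    using has_derivative_compose[OF l assms] .
  moreover have "(\<lambda>h. G (u + t *\<^sub>R d) \<bullet> (h *\<^sub>R d)) = (*) (G (u + t *\<^sub>R d) \<bullet> d)"
    by (auto simp: fun_eq_iff)
  ultimately show ?thesis by (simp add: has_field_derivative_def)
qed

lemma quad_bound:
  fixes F :: "'c::euclidean_space \<Rightarrow> real"
  assumes D: "\<And>u. (F has_derivative (\<lambda>h. G u \<bullet> h)) (at u)"
    and Lg: "\<And>u v. norm (G u - G v) \<le> M * norm (u - v)"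
  shows "F v - F u - G u \<bullet> (v - u) \<le> M / 2 * (norm (v - u))\<^sup>2"
    and "F v - F u - G u \<bullet> (v - u) \<ge> - (M / 2 * (norm (v - u))\<^sup>2)"
proof -
  define d where "d = v - u"
  have key: "\<bar>G (u + t *\<^sub>R d) \<bullet> d - G u \<bullet> d\<bar> \<le> M * t * (norm d)\<^sup>2" if "0 \<le> t" for t
  proof -
    have "\<bar>G (u + t *\<^sub>R d) \<bullet> d - G u \<bullet> d\<bar> = \<bar>(G (u + t *\<^sub>R d) - G u) \<bullet> d\<bar>"
      by (simp add: inner_diff_left)
    also have "\<dots> \<le> norm (G (u + t *\<^sub>R d) - G u) * norm d" by (rule Cauchy_Schwarz_ineq2)
    also have "\<dots> \<le> (M * norm (t *\<^sub>R d)) * norm d"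
      using Lg[of "u + t *\<^sub>R d" u] by (intro mult_right_mono) auto
    also have "\<dots> = M * t * (norm d)\<^sup>2" using that by (simp add: power2_eq_square)
    finally show ?thesis .
  qed
  define h1 where "h1 t = F (u + t *\<^sub>R d) - t * (G u \<bullet> d) - M / 2 * t\<^sup>2 * (norm d)\<^sup>2" for t
  define h2 where "h2 t = F (u + t *\<^sub>R d) - t * (G u \<bullet> d) + M / 2 * t\<^sup>2 * (norm d)\<^sup>2" for t
  have d1: "(h1 has_real_derivative (G (u + t *\<^sub>R d) \<bullet> d - G u \<bullet> d - M * t * (norm d)\<^sup>2)) (at t)" for t
    unfolding h1_def
    by (rule derivative_eq_intros line_deriv[OF D] | simp)+
  have d2: "(h2 has_real_derivative (G (u + t *\<^sub>R d) \<bullet> d - G u \<bullet> d + M * t * (norm d)\<^sup>2)) (at t)" for t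
    unfolding h2_def
    by (rule derivative_eq_intros line_deriv[OF D] | simp)+
  have "h1 1 \<le> h1 0"
    by (rule DERIV_nonpos_imp_nonincreasing[of 0 1]) (use d1 key in fastforce)+
  thus "F v - F u - G u \<bullet> (v - u) \<le> M / 2 * (norm (v - u))\<^sup>2"
    by (simp add: h1_def d_def)
  have "h2 0 \<le> h2 1"
    by (rule DERIV_nonneg_imp_nondecreasing[of 0 1]) (use d2 key in fastforce)+
  thus "F v - F u - G u \<bullet> (v - u) \<ge> - (M / 2 * (norm (v - u))\<^sup>2)"
    by (simp add: h2_def d_def)
qed


locale mm =
  fixes f :: "'a::euclidean_space \<Rightarrow> 'b::euclidean_space \<Rightarrow> real"
    and gx :: "'a \<Rightarrow> 'b \<Rightarrow> 'a" and gy :: "'a \<Rightarrow> 'b \<Rightarrow> 'b"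
    and X :: "'a set" and Y :: "'b set"
    and L p :: real and z :: 'a
  assumes X: "X \<noteq> {}" "closed X" "convex X"
    and Y: "Y \<noteq> {}" "compact Y" "convex Y"
    and grad: "\<And>x y. ((\<lambda>(u, v). f u v) has_derivative
                 (\<lambda>(du, dv). gx x y \<bullet> du + gy x y \<bullet> dv)) (at (x, y))"
    and concave: "\<And>x. concave_on UNIV (f x)"
    and Lip_x: "\<And>x y x' y'. norm (gx x y - gx x' y') \<le> L * norm ((x, y) - (x', y'))"
    and Lip_y: "\<And>x y x' y'. norm (gy x y - gy x' y') \<le> L * norm ((x, y) - (x', y'))"
    and pL: "p > L"
begin

lemma L_nonneg: "L \<ge> 0"
proof -
  obtain b :: 'a where b: "b \<in> Basis" using nonempty_Basis by blast
  have "norm (gx b 0 - gx 0 0) \<le> L * norm ((b, 0::'b) - (0, 0))" by (rule Lip_x)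
  moreover have "norm ((b, 0::'b) - (0, 0)) = 1" using b by (simp add: norm_Pair)
  ultimately show ?thesis by (metis mult.right_neutral norm_ge_zero order_trans)
qed

lemma fx_deriv: "((\<lambda>u. f u y) has_derivative (\<lambda>h. gx u y \<bullet> h)) (at u)"
proof -
  have l: "((\<lambda>u. (u, y)) has_derivative (\<lambda>h. (h, 0))) (at u)"
    by (auto intro!: derivative_eq_intros)
  show ?thesis using has_derivative_compose[OF l grad[of u y]] by simp
qed

lemma fy_deriv: "((\<lambda>v. f x v) has_derivative (\<lambda>h. gy x v \<bullet> h)) (at v)"
proof -
  have l: "((\<lambda>v. (x, v)) has_derivative (\<lambda>h. (0, h))) (at v)"
    by (auto intro!: derivative_eq_intros)
  show ?thesis using has_derivative_compose[OF l grad[of x v]] by simp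
qed

lemma f_cont: "continuous_on UNIV (\<lambda>(u, v). f u v)"
  by (rule continuous_at_imp_continuous_on) (metis has_derivative_continuous grad surj_pair)

lemma gx_lip1: "norm (gx u y - gx v y) \<le> L * norm (u - v)"
  using Lip_x[of u y v y] by (simp add: norm_Pair)

lemma gy_lip1: "norm (gy x u - gy x v) \<le> L * norm (u - v)"
  using Lip_y[of x u x v] by (simp add: norm_Pair)

lemma norm_pair_le: "norm ((a::'a, b::'b) - (c, d)) \<le> norm (a - c) + norm (b - d)"
  using norm_Pair_le[of "a - c" "b - d"] by simp

lemma norm_add_sq: "(norm (a + b))\<^sup>2 = (norm a)\<^sup>2 + 2 * (b \<bullet> a) + (norm (b::'c::real_inner))\<^sup>2"
  unfolding power2_norm_eq_inner by (simp add: inner_add_left inner_add_right inner_commute)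

lemma mult_left_mono_eq_helper: "\<And>A B C I::real. A = B + 2 * I + C \<Longrightarrow> p / 2 * A = p / 2 * B + p * I + p / 2 * C"
  by (simp add: field_simps)

lemma sq_ident: "p / 2 * (norm (x' - z))\<^sup>2 - p / 2 * (norm (x - z))\<^sup>2 - (p *\<^sub>R (x - z)) \<bullet> (x' - x)
   = p / 2 * (norm (x' - x))\<^sup>2"
proof -
  have "(norm (x' - z))\<^sup>2 = (norm (x' - x))\<^sup>2 + 2 * ((x - z) \<bullet> (x' - x)) + (norm (x - z))\<^sup>2"
    using norm_add_sq[of "x' - x" "x - z"] by simp
  hence "p / 2 * (norm (x' - z))\<^sup>2 = p / 2 * (norm (x' - x))\<^sup>2 + p * ((x - z) \<bullet> (x' - x)) + p / 2 * (norm (x - z))\<^sup>2"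
    using mult_left_mono_eq_helper by blast
  moreover have "(p *\<^sub>R (x - z)) \<bullet> (x' - x) = p * ((x - z) \<bullet> (x' - x))" by simp
  ultimately show ?thesis by linarith
qed

lemma K_split: "Kfun f p x' z y - Kfun f p x z y - (gx x y + p *\<^sub>R (x - z)) \<bullet> (x' - x)
   = (f x' y - f x y - gx x y \<bullet> (x' - x)) + p / 2 * (norm (x' - x))\<^sup>2"
proof -
  have "Kfun f p x' z y - Kfun f p x z y - (gx x y + p *\<^sub>R (x - z)) \<bullet> (x' - x)
   = (f x' y - f x y - gx x y \<bullet> (x' - x)) + (p / 2 * (norm (x' - z))\<^sup>2 - p / 2 * (norm (x - z))\<^sup>2 - (p *\<^sub>R (x - z)) \<bullet> (x' - x))"
    unfolding Kfun_def inner_add_left by linarith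
  thus ?thesis using sq_ident[of x' x] by linarith
qed

lemma K_lower: "Kfun f p x' z y - Kfun f p x z y - (gx x y + p *\<^sub>R (x - z)) \<bullet> (x' - x)
   \<ge> (p - L) / 2 * (norm (x' - x))\<^sup>2"
proof -
  have "f x' y - f x y - gx x y \<bullet> (x' - x) \<ge> - (L / 2 * (norm (x' - x))\<^sup>2)"
    by (rule quad_bound(2)[where F="\<lambda>u. f u y" and G="\<lambda>u. gx u y", OF fx_deriv gx_lip1])
  moreover have "(p - L) / 2 * (norm (x' - x))\<^sup>2 = p / 2 * (norm (x' - x))\<^sup>2 - L / 2 * (norm (x' - x))\<^sup>2"
    by (simp add: field_simps)
  ultimately show ?thesis using K_split[of x' y x] by linarith
qed

lemma K_upper: "Kfun f p x' z y - Kfun f p x z y - (gx x y + p *\<^sub>R (x - z)) \<bullet> (x' - x)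
   \<le> (p + L) / 2 * (norm (x' - x))\<^sup>2"
proof -
  have "f x' y - f x y - gx x y \<bullet> (x' - x) \<le> (L / 2 * (norm (x' - x))\<^sup>2)"
    by (rule quad_bound(1)[where F="\<lambda>u. f u y" and G="\<lambda>u. gx u y", OF fx_deriv gx_lip1])
  moreover have "(p + L) / 2 * (norm (x' - x))\<^sup>2 = p / 2 * (norm (x' - x))\<^sup>2 + L / 2 * (norm (x' - x))\<^sup>2"
    by (simp add: field_simps)
  ultimately show ?thesis using K_split[of x' y x] by linarith
qed

abbreviation xm where "xm y \<equiv> xmin f p X y z"

lemma K_cont: "continuous_on UNIV (\<lambda>x. Kfun f p x z y)"
proof -
  have "continuous_on UNIV (\<lambda>x. f x y)"
    by (rule continuous_at_imp_continuous_on) (metis has_derivative_continuous fx_deriv)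
  thus ?thesis unfolding Kfun_def by (intro continuous_intros)
qed

lemma ex_min: "\<exists>x. x \<in> X \<and> (\<forall>x'\<in>X. Kfun f p x z y \<le> Kfun f p x' z y)"
proof -
  obtain x0 where x0: "x0 \<in> X" using X(1) by blast
  define G where "G = gx x0 y + p *\<^sub>R (x0 - z)"
  define S where "S = X \<inter> {x. Kfun f p x z y \<le> Kfun f p x0 z y}"
  have lowb: "Kfun f p x z y \<ge> Kfun f p x0 z y - norm G * norm (x - x0) + (p - L) / 2 * (norm (x - x0))\<^sup>2" for x
  proof -
    have "G \<bullet> (x - x0) \<ge> - (norm G * norm (x - x0))"
      using Cauchy_Schwarz_ineq2[of G "x - x0"] by linarith
    thus ?thesis using K_lower[where x'=x and y=y and x=x0] unfolding G_def by linarith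
  qed
  have "closed S" unfolding S_def
    by (intro closed_Int X(2) closed_Collect_le K_cont continuous_on_const)
  moreover have "bounded S"
  proof -
    have "S \<subseteq> cball x0 (2 * norm G / (p - L))"
    proof
      fix x assume "x \<in> S"
      hence le: "Kfun f p x z y \<le> Kfun f p x0 z y" by (simp add: S_def)
      define r where "r = norm (x - x0)"
      have r0: "r \<ge> 0" by (simp add: r_def)
      have "(p - L) / 2 * r\<^sup>2 \<le> norm G * r" using lowb[of x] le unfolding r_def by linarith
      hence "(p - L) / 2 * r * r \<le> norm G * r" by (simp add: power2_eq_square mult.assoc)
      hence "r \<le> 2 * norm G / (p - L)"
      proof (cases "r = 0")
        case False
        with r0 have "r > 0" by simp
        with \<open>(p - L) / 2 * r * r \<le> norm G * r\<close> have "(p - L) / 2 * r \<le> norm G" by simp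
        thus ?thesis using pL by (simp add: field_simps)
      qed (use pL in simp)
      thus "x \<in> cball x0 (2 * norm G / (p - L))" by (simp add: r_def dist_norm norm_minus_commute)
    qed
    thus ?thesis using bounded_cball bounded_subset by blast
  qed
  ultimately have "compact S" using compact_eq_bounded_closed by blast
  moreover have "x0 \<in> S" using x0 by (simp add: S_def)
  ultimately obtain xb where xb: "xb \<in> S" "\<And>x. x \<in> S \<Longrightarrow> Kfun f p xb z y \<le> Kfun f p x z y"
    using continuous_attains_inf[of S "\<lambda>x. Kfun f p x z y"] K_cont continuous_on_subset
    by (metis empty_iff subset_UNIV)
  show ?thesis
  proof (intro exI conjI ballI)
    show "xb \<in> X" using xb by (simp add: S_def)
    fix x' assume "x' \<in> X"
    show "Kfun f p xb z y \<le> Kfun f p x' z y"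
    proof (cases "x' \<in> S")
      case True thus ?thesis by (rule xb(2))
    next
      case False
      hence "Kfun f p x' z y > Kfun f p x0 z y" using \<open>x' \<in> X\<close> by (simp add: S_def)
      moreover have "Kfun f p xb z y \<le> Kfun f p x0 z y" using xb(2)[OF \<open>x0 \<in> S\<close>] .
      ultimately show ?thesis by simp
    qed
  qed
qed

lemma xm_in: "xm y \<in> X"
  and xm_min: "x' \<in> X \<Longrightarrow> Kfun f p (xm y) z y \<le> Kfun f p x' z y"
  using someI_ex[OF ex_min[of y]] unfolding xmin_def by blast+

lemma opt: assumes "x' \<in> X"
  shows "(gx (xm y) y + p *\<^sub>R (xm y - z)) \<bullet> (x' - xm y) \<ge> 0"
proof -
  define x0 where "x0 = xm y"
  define d where "d = x' - x0"
  define G where "G = gx x0 y + p *\<^sub>R (x0 - z)"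
  have "- (G \<bullet> d) \<le> 0"
  proof (rule small_le0[where c = "(p + L) / 2 * (norm d)\<^sup>2"])
    fix t :: real assume t: "0 < t" "t \<le> 1"
    have eq: "x0 + t *\<^sub>R d = (1 - t) *\<^sub>R x0 + t *\<^sub>R x'" by (simp add: d_def algebra_simps)
    have "(1 - t) *\<^sub>R x0 + t *\<^sub>R x' \<in> X"
      using t X(3) assms xm_in unfolding x0_def by (intro convexD) auto
    hence inX: "x0 + t *\<^sub>R d \<in> X" using eq by simp
    have "Kfun f p x0 z y \<le> Kfun f p (x0 + t *\<^sub>R d) z y" using xm_min[OF inX] by (simp add: x0_def)
    moreover have "Kfun f p (x0 + t *\<^sub>R d) z y - Kfun f p x0 z y - G \<bullet> ((x0 + t *\<^sub>R d) - x0)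
       \<le> (p + L) / 2 * (norm ((x0 + t *\<^sub>R d) - x0))\<^sup>2"
      unfolding G_def by (rule K_upper)
    ultimately have "- (t * (G \<bullet> d)) \<le> (p + L) / 2 * (t\<^sup>2 * (norm d)\<^sup>2)"
      using t by (simp add: power_mult_distrib)
    hence "t * (- (G \<bullet> d)) \<le> t * ((p + L) / 2 * (norm d)\<^sup>2 * t)"
      by (simp add: power2_eq_square algebra_simps)
    thus "- (G \<bullet> d) \<le> (p + L) / 2 * (norm d)\<^sup>2 * t" using t(1) by (rule mult_left_le_imp_le)
  qed
  thus ?thesis by (simp add: G_def d_def x0_def)
qed

lemma sc: assumes "x' \<in> X"
  shows "Kfun f p x' z y \<ge> Kfun f p (xm y) z y + (p - L) / 2 * (norm (x' - xm y))\<^sup>2"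
  using K_lower[where x'=x' and y=y and x="xm y"] opt[OF assms, of y] by linarith

lemma xm_lip: "(p - L) * norm (xm y1 - xm y2) \<le> L * norm (y1 - y2)"
proof -
  define x1 where "x1 = xm y1"
  define x2 where "x2 = xm y2"
  define D where "D = x1 - x2"
  have o1: "(gx x1 y1 + p *\<^sub>R (x1 - z)) \<bullet> (x2 - x1) \<ge> 0"
    unfolding x1_def x2_def by (rule opt[OF xm_in])
  have o2: "(gx x2 y2 + p *\<^sub>R (x2 - z)) \<bullet> (x1 - x2) \<ge> 0"
    unfolding x1_def x2_def by (rule opt[OF xm_in])
  have e: "(gx x1 y1 + p *\<^sub>R (x1 - z)) \<bullet> (x2 - x1) + (gx x2 y2 + p *\<^sub>R (x2 - z)) \<bullet> (x1 - x2)
     = (gx x2 y2 - gx x1 y1) \<bullet> D - p * (D \<bullet> D)"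
    unfolding D_def by (simp add: inner_diff_right inner_diff_left inner_add_left algebra_simps)
  have "(gx x2 y2 - gx x1 y1) \<bullet> D \<le> norm (gx x2 y2 - gx x1 y1) * norm D"
    using Cauchy_Schwarz_ineq2 by (metis abs_le_iff)
  also have "\<dots> \<le> (L * (norm D + norm (y1 - y2))) * norm D"
  proof (rule mult_right_mono)
    have "norm (gx x2 y2 - gx x1 y1) \<le> L * norm ((x2, y2) - (x1, y1))" by (rule Lip_x)
    also have "\<dots> \<le> L * (norm (x2 - x1) + norm (y2 - y1))"
      using L_nonneg norm_pair_le by (intro mult_left_mono) auto
    finally show "norm (gx x2 y2 - gx x1 y1) \<le> L * (norm D + norm (y1 - y2))"
      by (simp add: D_def norm_minus_commute)
  qed simp
  finally have "p * (norm D)\<^sup>2 \<le> L * (norm D + norm (y1 - y2)) * norm D"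
    using o1 o2 e by (simp add: power2_norm_eq_inner)
  hence "(p - L) * norm D * norm D \<le> L * norm (y1 - y2) * norm D"
    by (simp add: power2_eq_square algebra_simps)
  hence "(p - L) * norm D \<le> L * norm (y1 - y2)"
    by (cases "norm D = 0") (use pL L_nonneg in auto)
  thus ?thesis by (simp add: D_def x1_def x2_def)
qed

lemma xm_lip2: "norm (xm y1 - xm y2) \<le> L / (p - L) * norm (y1 - y2)"
  using xm_lip[of y1 y2] pL by (simp add: field_simps mult.commute)

lemma xm_cont: "continuous_on UNIV xm"
proof (rule lipschitz_on_continuous_on)
  show "(L / (p - L))-lipschitz_on UNIV xm"
    using xm_lip2 L_nonneg pL by (intro lipschitz_onI) (auto simp: dist_norm)
qed

lemma d_eq: "dfun f p X y z = Kfun f p (xm y) z y"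
  unfolding dfun_def using xm_in xm_min by (intro cInf_eq_minimum) auto

lemma dcont: "continuous_on Y (\<lambda>y. Kfun f p (xm y) z y)"
proof -
  have "continuous_on UNIV (\<lambda>y. (\<lambda>(u, v). f u v) (xm y, y))"
    by (rule continuous_on_compose2[OF f_cont]) (auto intro!: continuous_intros xm_cont)
  hence "continuous_on UNIV (\<lambda>y. Kfun f p (xm y) z y)"
    unfolding Kfun_def by (auto intro!: continuous_intros xm_cont)
  thus ?thesis using continuous_on_subset by blast
qed

lemma Yset_ne: "Yset f p X Y z \<noteq> {}"
proof -
  obtain ys where "ys \<in> Y" "\<And>y. y \<in> Y \<Longrightarrow> Kfun f p (xm y) z y \<le> Kfun f p (xm ys) z ys"
    using continuous_attains_sup[OF Y(2) Y(1) dcont] by blast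
  thus ?thesis unfolding Yset_def d_eq by blast
qed

lemma conc_tan: "f x y' \<le> f x y + gy x y \<bullet> (y' - y)"
proof -
  define d where "d = y' - y"
  have "f x y' - f x y - gy x y \<bullet> d \<le> 0"
  proof (rule small_le0[where c = "L / 2 * (norm d)\<^sup>2"])
    fix t :: real assume t: "0 < t" "t \<le> 1"
    have "f x ((1 - t) *\<^sub>R y + t *\<^sub>R y') \<ge> (1 - t) * f x y + t * f x y'"
      using concave_onD[OF concave[of x]] t by auto
    moreover have "(1 - t) *\<^sub>R y + t *\<^sub>R y' = y + t *\<^sub>R d" by (simp add: d_def algebra_simps)
    moreover have "f x (y + t *\<^sub>R d) - f x y - gy x y \<bullet> ((y + t *\<^sub>R d) - y) \<le> L / 2 * (norm ((y + t *\<^sub>R d) - y))\<^sup>2"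
      by (rule quad_bound(1)[where F="f x" and G="gy x", OF fy_deriv gy_lip1])
    ultimately have "t * (f x y' - f x y) \<le> t * (gy x y \<bullet> d) + L / 2 * (t\<^sup>2 * (norm d)\<^sup>2)"
      using t by (simp add: power_mult_distrib algebra_simps)
    hence "t * (f x y' - f x y - gy x y \<bullet> d) \<le> t * (L / 2 * (norm d)\<^sup>2 * t)"
      by (simp add: power2_eq_square algebra_simps)
    thus "f x y' - f x y - gy x y \<bullet> d \<le> L / 2 * (norm d)\<^sup>2 * t" using t(1) by (rule mult_left_le_imp_le)
  qed
  thus ?thesis by (simp add: d_def)
qed

lemma foc: assumes ys: "ys \<in> Yset f p X Y z" and y: "y \<in> Y"
  shows "gy (xm ys) ys \<bullet> (y - ys) \<le> 0"
proof -
  define d where "d = y - ys"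
  have ysY: "ys \<in> Y" and ysmax: "\<And>y'. y' \<in> Y \<Longrightarrow> dfun f p X y' z \<le> dfun f p X ys z"
    using ys unfolding Yset_def by auto
  have "gy (xm ys) ys \<bullet> d \<le> 0"
  proof (rule small_le0[where c = "L * (L / (p - L) + 1) * (norm d)\<^sup>2"])
    fix t :: real assume t: "0 < t" "t \<le> 1"
    define yt where "yt = ys + t *\<^sub>R d"
    have "(1 - t) *\<^sub>R ys + t *\<^sub>R y \<in> Y"
      using t Y(3) ysY y by (intro convexD) auto
    moreover have "(1 - t) *\<^sub>R ys + t *\<^sub>R y = yt" by (simp add: yt_def d_def algebra_simps)
    ultimately have ytY: "yt \<in> Y" by simp
    have "Kfun f p (xm yt) z yt \<le> Kfun f p (xm ys) z ys" using ysmax[OF ytY] by (simp add: d_eq)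
    also have "\<dots> \<le> Kfun f p (xm yt) z ys" by (rule xm_min[OF xm_in])
    finally have "f (xm yt) yt \<le> f (xm yt) ys" by (simp add: Kfun_def)
    moreover have "f (xm yt) ys \<le> f (xm yt) yt + gy (xm yt) yt \<bullet> (ys - yt)" by (rule conc_tan)
    moreover have "ys - yt = - (t *\<^sub>R d)" by (simp add: yt_def)
    ultimately have "t * (gy (xm yt) yt \<bullet> d) \<le> 0" by simp
    hence g1: "gy (xm yt) yt \<bullet> d \<le> 0" using t by (simp add: mult_le_0_iff)
    have "(gy (xm ys) ys - gy (xm yt) yt) \<bullet> d \<le> norm (gy (xm ys) ys - gy (xm yt) yt) * norm d"
      using Cauchy_Schwarz_ineq2 by (metis abs_le_iff)
    also have "\<dots> \<le> (L * (L / (p - L) * norm (t *\<^sub>R d) + norm (t *\<^sub>R d))) * norm d"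
    proof (rule mult_right_mono)
      have "norm (gy (xm ys) ys - gy (xm yt) yt) \<le> L * norm ((xm ys, ys) - (xm yt, yt))" by (rule Lip_y)
      also have "\<dots> \<le> L * (norm (xm ys - xm yt) + norm (ys - yt))"
        using L_nonneg norm_pair_le by (intro mult_left_mono) auto
      also have "\<dots> \<le> L * (L / (p - L) * norm (ys - yt) + norm (ys - yt))"
        using L_nonneg xm_lip2[of ys yt] by (intro mult_left_mono) auto
      finally show "norm (gy (xm ys) ys - gy (xm yt) yt) \<le> L * (L / (p - L) * norm (t *\<^sub>R d) + norm (t *\<^sub>R d))"
        by (simp add: yt_def)
    qed simp
    also have "\<dots> = L * (L / (p - L) + 1) * (norm d)\<^sup>2 * t"
      using t by (simp add: power2_eq_square algebra_simps)
    finally show "gy (xm ys) ys \<bullet> d \<le> L * (L / (p - L) + 1) * (norm d)\<^sup>2 * t"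
      using g1 by (simp add: inner_diff_left)
  qed
  thus ?thesis by (simp add: d_def)
qed

lemma saddle: assumes "ys \<in> Yset f p X Y z" "y \<in> Y"
  shows "f (xm ys) y \<le> f (xm ys) ys"
  using conc_tan[of "xm ys" y ys] foc[OF assms] by linarith

lemma K_y_cont: "continuous_on Y (\<lambda>y. Kfun f p x z y)"
proof -
  have "continuous_on UNIV (\<lambda>y. f x y)"
    by (rule continuous_at_imp_continuous_on) (metis has_derivative_continuous fy_deriv)
  hence "continuous_on UNIV (\<lambda>y. Kfun f p x z y)" unfolding Kfun_def by (intro continuous_intros)
  thus ?thesis using continuous_on_subset by blast
qed

lemma K_bdd: "bdd_above ((\<lambda>y. Kfun f p x z y) ` Y)"
  by (intro bounded_imp_bdd_above compact_imp_bounded compact_continuous_image K_y_cont Y(2))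

lemma xstar_eq: assumes ys: "ys \<in> Yset f p X Y z"
  shows "xstar f p X Y z = xm ys"
proof -
  define \<phi> where "\<phi> x = (SUP y\<in>Y. Kfun f p x z y)" for x
  have ysY: "ys \<in> Y" using ys unfolding Yset_def by auto
  define x0 where "x0 = xm ys"
  have phi0: "\<phi> x0 = Kfun f p x0 z ys"
    unfolding \<phi>_def using ysY saddle[OF ys] unfolding x0_def Kfun_def
    by (intro cSup_eq_maximum) auto
  have Kle: "Kfun f p x z ys \<le> \<phi> x" for x
    unfolding \<phi>_def using ysY K_bdd by (intro cSUP_upper)
  have x0min: "\<phi> x0 \<le> \<phi> x'" if "x' \<in> X" for x'
    using phi0 xm_min[OF that, of ys] Kle[of x'] unfolding x0_def by linarith
  have ex: "\<exists>x. x \<in> X \<and> (\<forall>x'\<in>X. \<phi> x \<le> \<phi> x')"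
    using x0min xm_in unfolding x0_def by blast
  define xs where "xs = xstar f p X Y z"
  have xs: "xs \<in> X" "\<And>x'. x' \<in> X \<Longrightarrow> \<phi> xs \<le> \<phi> x'"
    using someI_ex[OF ex] unfolding xs_def xstar_def \<phi>_def by blast+
  have "\<phi> xs \<le> \<phi> x0" using xs(2) xm_in unfolding x0_def by blast
  moreover have "Kfun f p xs z ys \<ge> Kfun f p x0 z ys + (p - L) / 2 * (norm (xs - x0))\<^sup>2"
    unfolding x0_def by (rule sc[OF xs(1)])
  ultimately have "(p - L) / 2 * (norm (xs - x0))\<^sup>2 \<le> 0" using Kle[of xs] phi0 by linarith
  hence "(norm (xs - x0))\<^sup>2 \<le> 0" using pL by (simp add: mult_le_0_iff)
  hence "xs = x0" by simp
  thus ?thesis by (simp add: xs_def x0_def)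
qed

lemma main_bound:
  assumes alpha: "\<alpha> > 0" and yY: "y \<in> Y" and ys: "ys \<in> Yset f p X Y z"
  defines "yp \<equiv> yplus f gy p \<alpha> X Y y z"
  shows "\<alpha> * (p - L) * (norm (xstar f p X Y z - xm yp))\<^sup>2
     \<le> (1 + \<alpha> * L + \<alpha> * L * (2 * (p + L) / (p - L))) * norm (y - yp) * norm (ys - yp)"
proof -
  define \<sigma> where "\<sigma> = 2 * (p + L) / (p - L)"
  define w where "w = y + \<alpha> *\<^sub>R gy (xm y) y"
  define e where "e = ys - yp"
  have cY: "closed Y" using Y(2) compact_imp_closed by blast
  have ysY: "ys \<in> Y" using ys unfolding Yset_def by auto
  have ypdef: "yp = closest_point Y w" unfolding yp_def yplus_def w_def ..
  have ypY: "yp \<in> Y" unfolding ypdef by (rule closest_point_in_set[OF cY Y(1)])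
  have proj: "(w - yp) \<bullet> (ys - yp) \<le> 0"
    unfolding ypdef using Y(3) cY closest_point_in_set[OF cY Y(1)] ysY closest_point_le[OF cY]
    by (intro any_closest_point_dot) auto
  have xs: "xstar f p X Y z = xm ys" by (rule xstar_eq[OF ys])
  define D where "D = xm ys - xm yp"
  have s1: "Kfun f p (xm yp) z ys \<ge> Kfun f p (xm ys) z ys + (p - L) / 2 * (norm (xm yp - xm ys))\<^sup>2"
    by (rule sc[OF xm_in])
  have s2: "Kfun f p (xm ys) z yp \<ge> Kfun f p (xm yp) z yp + (p - L) / 2 * (norm (xm ys - xm yp))\<^sup>2"
    by (rule sc[OF xm_in])
  have sd: "f (xm ys) yp \<le> f (xm ys) ys" by (rule saddle[OF ys ypY])
  have ct: "f (xm yp) ys \<le> f (xm yp) yp + gy (xm yp) yp \<bullet> (ys - yp)" by (rule conc_tan)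
  have nD: "norm (xm yp - xm ys) = norm D" by (simp add: D_def norm_minus_commute)
  have nD2: "norm (xm ys - xm yp) = norm D" by (simp add: D_def)
  have kd1: "Kfun f p (xm yp) z ys - Kfun f p (xm yp) z yp = f (xm yp) ys - f (xm yp) yp" by (simp add: Kfun_def)
  have kd2: "Kfun f p (xm ys) z ys - Kfun f p (xm ys) z yp = f (xm ys) ys - f (xm ys) yp" by (simp add: Kfun_def)
  have ge: "gy (xm yp) yp \<bullet> e = gy (xm yp) yp \<bullet> (ys - yp)" by (simp add: e_def)
  have h2: "(p - L) * (norm D)\<^sup>2 = 2 * ((p - L) / 2 * (norm D)\<^sup>2)" by simp
  have A: "(p - L) * (norm D)\<^sup>2 \<le> gy (xm yp) yp \<bullet> e"
    using s1 s2 sd ct kd1 kd2 ge h2 unfolding nD nD2 by linarith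
  have B1: "\<alpha> * (gy (xm y) y \<bullet> e) \<le> norm (y - yp) * norm e"
  proof -
    have "\<alpha> * (gy (xm y) y \<bullet> e) = (w - y) \<bullet> e" by (simp add: w_def)
    also have "\<dots> \<le> (yp - y) \<bullet> e" using proj unfolding e_def by (simp add: inner_diff_left)
    also have "\<dots> \<le> norm (yp - y) * norm e" by (metis Cauchy_Schwarz_ineq2 abs_le_iff)
    finally show ?thesis by (simp add: norm_minus_commute)
  qed
  have B2: "(gy (xm yp) yp - gy (xm y) y) \<bullet> e \<le> L * (\<sigma> + 1) * norm (y - yp) * norm e"
  proof -
    have "(gy (xm yp) yp - gy (xm y) y) \<bullet> e \<le> norm (gy (xm yp) yp - gy (xm y) y) * norm e"
      by (metis Cauchy_Schwarz_ineq2 abs_le_iff)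
    also have "\<dots> \<le> (L * (\<sigma> + 1) * norm (y - yp)) * norm e"
    proof (rule mult_right_mono)
      have "norm (gy (xm yp) yp - gy (xm y) y) \<le> L * norm ((xm yp, yp) - (xm y, y))" by (rule Lip_y)
      also have "\<dots> \<le> L * (norm (xm yp - xm y) + norm (yp - y))"
        using L_nonneg norm_pair_le by (intro mult_left_mono) auto
      also have "\<dots> \<le> L * (\<sigma> * norm (yp - y) + norm (yp - y))"
      proof -
        have "L / (p - L) \<le> \<sigma>" unfolding \<sigma>_def using pL L_nonneg by (intro divide_right_mono) auto
        hence "L / (p - L) * norm (yp - y) \<le> \<sigma> * norm (yp - y)" by (intro mult_right_mono) auto
        thus ?thesis using xm_lip2[of yp y] L_nonneg by (intro mult_left_mono) auto
      qed
      finally show "norm (gy (xm yp) yp - gy (xm y) y) \<le> L * (\<sigma> + 1) * norm (y - yp)"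
        by (simp add: norm_minus_commute algebra_simps)
    qed simp
    finally show ?thesis .
  qed
  have "\<alpha> * ((p - L) * (norm D)\<^sup>2) \<le> \<alpha> * (gy (xm yp) yp \<bullet> e)"
    using A alpha by (intro mult_left_mono) auto
  also have "\<dots> = \<alpha> * (gy (xm y) y \<bullet> e) + \<alpha> * ((gy (xm yp) yp - gy (xm y) y) \<bullet> e)"
    by (simp add: inner_diff_left algebra_simps)
  also have "\<dots> \<le> norm (y - yp) * norm e + \<alpha> * (L * (\<sigma> + 1) * norm (y - yp) * norm e)"
    using B1 B2 alpha by (intro add_mono mult_left_mono) auto
  also have "\<dots> = (1 + \<alpha> * L + \<alpha> * L * \<sigma>) * norm (y - yp) * norm e"
    by (simp add: algebra_simps)
  finally show ?thesis by (simp add: xs D_def e_def \<sigma>_def mult.assoc)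
qed

end

theorem lemma11:
  fixes f :: "'a::euclidean_space \<Rightarrow> 'b::euclidean_space \<Rightarrow> real"
    and gx :: "'a \<Rightarrow> 'b \<Rightarrow> 'a" and gy :: "'a \<Rightarrow> 'b \<Rightarrow> 'b"
    and X :: "'a set" and Y :: "'b set"
    and L p \<alpha> :: real and y :: 'b and z :: 'a
  assumes X: "X \<noteq> {}" "closed X" "convex X"
    and Y: "Y \<noteq> {}" "closed Y" "convex Y" "compact Y"
    and grad: "\<And>x y. ((\<lambda>(u, v). f u v) has_derivative
                 (\<lambda>(du, dv). gx x y \<bullet> du + gy x y \<bullet> dv)) (at (x, y))"
    and cont_gx: "continuous_on UNIV (\<lambda>(x, y). gx x y)"
    and cont_gy: "continuous_on UNIV (\<lambda>(x, y). gy x y)"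
    and concave: "\<And>x. concave_on UNIV (f x)"
    and Lip_x: "\<And>x y x' y'. norm (gx x y - gx x' y') \<le> L * norm ((x, y) - (x', y'))"
    and Lip_y: "\<And>x y x' y'. norm (gy x y - gy x' y') \<le> L * norm ((x, y) - (x', y'))"
    and bdd: "\<exists>B. \<forall>x\<in>X. B \<le> (SUP y\<in>Y. f x y)"
    and pL: "p > L" and alpha: "\<alpha> > 0"
    and yY: "y \<in> Y"
  shows "let \<sigma>\<^sub>2 = 2 * (p + L) / (p - L);
             yp = yplus f gy p \<alpha> X Y y z;
             C = 1 + \<alpha> * L + \<alpha> * L * \<sigma>\<^sub>2
         in \<alpha> * (p - L) * (norm (xstar f p X Y z - xmin f p X yp z))\<^sup>2
              \<le> C * norm (y - yp) * infdist yp (Yset f p X Y z)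
          \<and> C * norm (y - yp) * infdist yp (Yset f p X Y z)
              \<le> C * norm (y - yp) * diameter Y"
proof -
  interpret mm f gx gy X Y L p z
    using X Y grad concave Lip_x Lip_y pL by unfold_locales auto
  define yp where "yp = yplus f gy p \<alpha> X Y y z"
  define C where "C = 1 + \<alpha> * L + \<alpha> * L * (2 * (p + L) / (p - L))"
  define S where "S = Yset f p X Y z"
  define c where "c = C * norm (y - yp)"
  define lhs where "lhs = \<alpha> * (p - L) * (norm (xstar f p X Y z - xmin f p X yp z))\<^sup>2"
  have C0: "C \<ge> 0" unfolding C_def using L_nonneg pL alpha by (auto intro!: add_nonneg_nonneg mult_nonneg_nonneg)
  hence c0: "c \<ge> 0" by (simp add: c_def)
  have Sne: "S \<noteq> {}" unfolding S_def by (rule Yset_ne)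
  have each: "lhs \<le> c * dist yp ys" if "ys \<in> S" for ys
    using main_bound[OF alpha yY that[unfolded S_def]]
    by (simp add: lhs_def c_def C_def yp_def dist_norm norm_minus_commute mult.assoc)
  have part1: "lhs \<le> c * infdist yp S"
  proof (cases "c = 0")
    case True
    obtain ys where "ys \<in> S" using Sne by blast
    thus ?thesis using each True by simp
  next
    case False
    hence cp: "c > 0" using c0 by simp
    have "lhs / c \<le> infdist yp S"
      unfolding infdist_notempty[OF Sne]
    proof (rule cINF_greatest[OF Sne])
      fix ys assume "ys \<in> S"
      thus "lhs / c \<le> dist yp ys" using each cp by (simp add: divide_le_eq mult.commute)
    qed
    thus ?thesis using cp by (simp add: divide_le_eq mult.commute)
  qed
  have part2: "c * infdist yp S \<le> c * diameter Y"
  proof (rule mult_left_mono[OF _ c0])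
    obtain ys where ys: "ys \<in> S" using Sne by blast
    have ysY: "ys \<in> Y" using ys unfolding S_def Yset_def by auto
    have ypY: "yp \<in> Y" unfolding yp_def yplus_def using assms(4,7) by (intro closest_point_in_set compact_imp_closed) auto
    have "infdist yp S \<le> dist yp ys" by (rule infdist_le[OF ys])
    also have "\<dots> \<le> diameter Y" using ypY ysY compact_imp_bounded[OF assms(7)] by (intro diameter_bounded_bound) auto
    finally show "infdist yp S \<le> diameter Y" .
  qed
  show ?thesis
    unfolding Let_def using part1 part2
    by (simp add: lhs_def c_def C_def S_def yp_def)
qed

end
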